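(* Let $H$ be a real Hilbert space, $A:H\to c_0$ bounded linear with adjoint $A^*:\ell^1\to H$ (identifying $c_0^*=\ell^1$), and assume $A$ and $A^*$ are injective. Let $u^\dagger\in\ell^1$ and suppose there exists $v^\dagger\in H$ with $\|Av^\dagger\|_\infty\le1$ and $(Av^\dagger)_i=\operatorname{sign}(u^\dagger_i)$ whenever $u^\dagger_i\ne0$. Then there exists $v^\ddagger\in H$ with $\|Av^\ddagger\|_\infty\le1$, $(Av^\ddagger)_i=\operatorname{sign}(u^\dagger_i)$ whenever $u^\dagger_i\ne0$, and $|(Av^\ddagger)_i|<1$ whenever $u^\dagger_i=0$.
   Context: $A^*$ is defined by $\langle A^*u,z\rangle=\sum_iu_i(Az)_i$. $\operatorname{sign}(t)=t/|t|$ for $t\neq0$. *)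

theory Defs
  imports "HOL-Analysis.Analysis"
begin

definition in_c0 :: "(nat \<Rightarrow> real) \<Rightarrow> bool" where
  "in_c0 x \<longleftrightarrow> x \<longlonglongrightarrow> 0"

definition in_l1 :: "(nat \<Rightarrow> real) \<Rightarrow> bool" where
  "in_l1 u \<longleftrightarrow> summable (\<lambda>i. \<bar>u i\<bar>)"

definition sup_norm :: "(nat \<Rightarrow> real) \<Rightarrow> real" where
  "sup_norm x = (SUP i. \<bar>x i\<bar>)"

definition bounded_linear_c0 :: "('h::real_normed_vector \<Rightarrow> nat \<Rightarrow> real) \<Rightarrow> bool" where
  "bounded_linear_c0 A \<longleftrightarrow>
     (\<forall>i. linear (\<lambda>z. A z i)) \<and> (\<forall>z. in_c0 (A z)) \<and> (\<exists>K. \<forall>z i. \<bar>A z i\<bar> \<le> K * norm z)"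

definition is_adjoint_c0 ::
  "('h::real_inner \<Rightarrow> nat \<Rightarrow> real) \<Rightarrow> ((nat \<Rightarrow> real) \<Rightarrow> 'h) \<Rightarrow> bool" where
  "is_adjoint_c0 A Astar \<longleftrightarrow>
     (\<forall>u z. in_l1 u \<longrightarrow> inner (Astar u) z = (\<Sum>i. u i * A z i))"

end

theory Submission
  imports Defs
begin

lemma lin_add: "\<forall>i. linear (\<lambda>z. A z i) \<Longrightarrow> A (x + y) i = A x i + A y i"
  using real_vector.linear_add[of "\<lambda>z. A z i"] by blast
lemma lin_diff: "\<forall>i. linear (\<lambda>z. A z i) \<Longrightarrow> A (x - y) i = A x i - A y i"
  using real_vector.linear_diff[of "\<lambda>z. A z i"] by blast
lemma lin_scale: "\<forall>i. linear (\<lambda>z. A z i) \<Longrightarrow> A (c *\<^sub>R x) i = c * A x i"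
  using linear_cmul[of "\<lambda>z. A z i"] by simp
lemma lin_sum: "\<forall>i. linear (\<lambda>z. A z i) \<Longrightarrow> A (sum g S) i = (\<Sum>a\<in>S. A (g a) i)"
  using real_vector.linear_sum[of "\<lambda>z. A z i"] by blast

lemma adj_zero:
  fixes A :: "'h::real_inner \<Rightarrow> nat \<Rightarrow> real"
  assumes adj: "is_adjoint_c0 A Astar" and u: "in_l1 u"
    and fs: "finite S" and supp: "\<And>j. j \<notin> S \<Longrightarrow> u j = 0"
    and z: "\<And>z. (\<Sum>j\<in>S. u j * A z j) = 0"
  shows "Astar u = 0"
proof -
  have "inner (Astar u) (Astar u) = (\<Sum>j. u j * A (Astar u) j)"
    using adj u unfolding is_adjoint_c0_def by blast
  also have "\<dots> = (\<Sum>j\<in>S. u j * A (Astar u) j)"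
    by (rule suminf_finite) (use fs supp in auto)
  also have "\<dots> = 0" by (rule z)
  finally show ?thesis by simp
qed

lemma surj_fin:
  fixes A :: "'h::real_inner \<Rightarrow> nat \<Rightarrow> real"
  assumes lin: "\<forall>i. linear (\<lambda>z. A z i)" and adj: "is_adjoint_c0 A Astar"
    and inj: "inj_on Astar {u. in_l1 u}" and fin: "finite F"
  shows "\<forall>b. \<exists>z. \<forall>i\<in>F. A z i = b i"
  using fin
proof (induction F rule: finite_induct)
  case empty
  then show ?case by simp
next
  case (insert k F)
  show ?case
  proof
    fix b :: "nat \<Rightarrow> real"
    obtain zb where zb: "\<forall>i\<in>F. A zb i = b i" using insert.IH by blast
    show "\<exists>z. \<forall>i\<in>insert k F. A z i = b i"
    proof (cases "\<exists>z0. (\<forall>i\<in>F. A z0 i = 0) \<and> A z0 k \<noteq> 0")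
      case True
      then obtain z0 where z0: "\<forall>i\<in>F. A z0 i = 0" "A z0 k \<noteq> 0" by blast
      define c where "c = (b k - A zb k) / A z0 k"
      have "\<forall>i\<in>insert k F. A (zb + c *\<^sub>R z0) i = b i"
        using z0 zb by (auto simp: lin_add[OF lin] lin_scale[OF lin] c_def)
      then show ?thesis by blast
    next
      case False
      have "\<forall>i. \<exists>z. \<forall>j\<in>F. A z j = (if j = i then 1 else 0)"
      proof
        fix i show "\<exists>z. \<forall>j\<in>F. A z j = (if j = i then 1 else 0)"
          using insert.IH[rule_format, of "\<lambda>j. if j = i then 1 else 0"] by simp
      qed
      then obtain zz where zz: "\<And>i j. j \<in> F \<Longrightarrow> A (zz i) j = (if j = i then 1 else 0)"
        by metis
      define u where "u j = (if j = k then 1 else if j \<in> F then - A (zz j) k else 0)" for j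
      have fs: "finite (insert k F)" using insert by simp
      have supp: "\<And>j. j \<notin> insert k F \<Longrightarrow> u j = 0" by (auto simp: u_def)
      have ul1: "in_l1 u" unfolding in_l1_def
        by (rule summable_finite[OF fs]) (use supp in auto)
      have zero: "(\<Sum>j\<in>insert k F. u j * A z j) = 0" for z
      proof -
        define y where "y = z - (\<Sum>j\<in>F. A z j *\<^sub>R zz j)"
        have Ay: "A y i = A z i - (\<Sum>j\<in>F. A z j * A (zz j) i)" for i
          by (simp add: y_def lin_diff[OF lin] lin_sum[OF lin] lin_scale[OF lin])
        have "\<forall>i\<in>F. A y i = 0"
        proof
          fix i assume i: "i \<in> F"
          have "(\<Sum>j\<in>F. A z j * A (zz j) i) = (\<Sum>j\<in>F. if j = i then A z j else 0)"
            using zz[OF i] by (intro sum.cong) auto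
          also have "\<dots> = A z i" using i insert.hyps(1) by simp
          finally show "A y i = 0" using Ay by simp
        qed
        then have "A y k = 0" using False by blast
        then have e: "A z k = (\<Sum>j\<in>F. A z j * A (zz j) k)" using Ay by simp
        have "(\<Sum>j\<in>insert k F. u j * A z j) = A z k + (\<Sum>j\<in>F. u j * A z j)"
          using insert.hyps by (simp add: u_def)
        also have "(\<Sum>j\<in>F. u j * A z j) = - (\<Sum>j\<in>F. A z j * A (zz j) k)"
          using insert.hyps by (auto simp: u_def sum_negf[symmetric] intro!: sum.cong)
        finally show ?thesis using e by simp
      qed
      have "Astar u = 0" by (rule adj_zero[OF adj ul1 fs supp zero])
      moreover have "Astar (\<lambda>_. 0) = 0"
        by (rule adj_zero[of A Astar _ "{}"]) (auto simp: adj in_l1_def)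
      moreover have "in_l1 (\<lambda>_::nat. 0::real)" by (simp add: in_l1_def)
      ultimately have "u = (\<lambda>_. 0)" using inj ul1 unfolding inj_on_def by auto
      then have "u k = 0" by simp
      then show ?thesis by (simp add: u_def)
    qed
  qed
qed

theorem lemma2:
  fixes A :: "'h::{real_inner, complete_space} \<Rightarrow> nat \<Rightarrow> real"
    and Astar :: "(nat \<Rightarrow> real) \<Rightarrow> 'h"
    and udag :: "nat \<Rightarrow> real"
  assumes "bounded_linear_c0 A"
    and "is_adjoint_c0 A Astar"
    and "inj A"
    and "inj_on Astar {u. in_l1 u}"
    and "in_l1 udag"
    and "\<exists>v. sup_norm (A v) \<le> 1 \<and> (\<forall>i. udag i \<noteq> 0 \<longrightarrow> A v i = sgn (udag i))"
  shows "\<exists>v. sup_norm (A v) \<le> 1 \<and> (\<forall>i. udag i \<noteq> 0 \<longrightarrow> A v i = sgn (udag i))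
             \<and> (\<forall>i. udag i = 0 \<longrightarrow> \<bar>A v i\<bar> < 1)"
proof -
  obtain vd where vd: "sup_norm (A vd) \<le> 1" "\<forall>i. udag i \<noteq> 0 \<longrightarrow> A vd i = sgn (udag i)"
    using assms(6) by blast
  have lin: "\<forall>i. linear (\<lambda>z. A z i)" and c0: "\<And>z. in_c0 (A z)"
    using assms(1) unfolding bounded_linear_c0_def by auto
  obtain K where K: "\<And>z i. \<bar>A z i\<bar> \<le> K * norm z"
    using assms(1) unfolding bounded_linear_c0_def by auto
  have bdd: "bdd_above (range (\<lambda>i. \<bar>A z i\<bar>))" for z
    using K by (intro bdd_aboveI2) blast
  have le1: "\<bar>A vd i\<bar> \<le> 1" for i
    using cSUP_upper[OF UNIV_I bdd[of vd], of i] vd(1) unfolding sup_norm_def by simp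
  have "A vd \<longlonglongrightarrow> 0" using c0 unfolding in_c0_def by blast
  then obtain N where N: "\<And>n. n \<ge> N \<Longrightarrow> \<bar>A vd n\<bar> < 1/2"
    unfolding LIMSEQ_iff by (metis real_norm_def diff_zero half_gt_zero zero_less_one)
  obtain w where w: "\<forall>i\<in>{..<N}. A w i = (if udag i \<noteq> 0 then 0 else - A vd i)"
    using surj_fin[OF lin assms(2) assms(4), of "{..<N}", rule_format,
      of "\<lambda>i. if udag i \<noteq> 0 then 0 else - A vd i"] by auto
  define M where "M = K * norm w"
  have Mw: "\<bar>A w i\<bar> \<le> M" for i using K M_def by simp
  then have M0: "M \<ge> 0" by (meson abs_ge_zero order_trans)
  define t where "t = 1 / (4 * (M + 1))"
  have t0: "0 < t" and t1: "t \<le> 1/4" using M0 by (auto simp: t_def field_simps)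
  have tM: "t * M < 1/4" using M0 by (auto simp: t_def field_simps)
  define v where "v = vd + t *\<^sub>R w"
  have Av: "A v i = A vd i + t * A w i" for i
    by (simp add: v_def lin_add[OF lin] lin_scale[OF lin])
  have supp: "A v i = sgn (udag i)" if "udag i \<noteq> 0" for i
  proof -
    have "\<bar>A vd i\<bar> = 1" using vd(2) that by (simp add: abs_sgn)
    then have "i < N" using N[of i] by (cases "i \<ge> N") auto
    then show ?thesis using w that vd(2) Av by auto
  qed
  have off: "\<bar>A v i\<bar> < 1" if "udag i = 0" for i
  proof (cases "i < N")
    case True
    then have "A v i = (1 - t) * A vd i" using w that Av by (simp add: algebra_simps)
    then have "\<bar>A v i\<bar> = (1 - t) * \<bar>A vd i\<bar>" using t1 by (simp add: abs_mult)
    also have "\<dots> \<le> 1 - t" using le1[of i] t1 by (simp add: mult_left_le)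
    finally show ?thesis using t0 by simp
  next
    case False
    have "\<bar>A v i\<bar> \<le> \<bar>A vd i\<bar> + t * \<bar>A w i\<bar>"
      using Av t0 by (simp add: abs_triangle_ineq[THEN order_trans] abs_mult)
    also have "t * \<bar>A w i\<bar> \<le> t * M" using Mw t0 by (simp add: mult_left_mono)
    finally show ?thesis using N[of i] False tM by simp
  qed
  have all: "\<bar>A v i\<bar> \<le> 1" for i
    using supp[of i] off[of i] by (cases "udag i = 0") (auto simp: abs_sgn)
  have "sup_norm (A v) \<le> 1" unfolding sup_norm_def
    by (rule cSUP_least) (use all in auto)
  then show ?thesis using supp off by blast
qed

end
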